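(* Let $S$ be a closed hyperbolic surface and $\gamma \subset S$ a closed geodesic. Let $\alpha,\beta$ be two complete geodesics in the hyperbolic plane $\mathbb{H}^2$ (the universal cover of $S$), both projecting to $\gamma$ under the covering projection, which cross transversely at a point $p$ that projects to a self-intersection of $\gamma$. Let $\epsilon>0$ be such that $8\epsilon$ is less than the length of the shortest nontrivial closed curve on $S$, and let $\alpha_\epsilon,\beta_\epsilon$ be the $\epsilon$-trap for $p$. Then $\operatorname{length}(\alpha_\epsilon) < \operatorname{length}(\gamma) + 4\epsilon$, and similarly $\operatorname{length}(\beta_\epsilon) < \operatorname{length}(\gamma) + 4\epsilon$.
   Context: For two complete geodesics $\alpha,\beta$ in $\mathbb{H}^2$ crossing transversely at $p$ and $\epsilon>0$, $\alpha_\epsilon$ denotes the subset (segment) of $\alpha$ consisting of points lying in the $2\epsilon$-neighborhood of $\beta$, and similarly $\beta_\epsilon$ is the segment of $\beta$ in the $2\epsilon$-neighborhood of $\alpha$. The pair $\alpha_\epsilon,\beta_\epsilon$ is called the $\epsilon$-trap for $p$. *)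

theory Defs
  imports "HOL-Analysis.Analysis"
begin

definition hplane :: "complex set" where
  "hplane = {z. Im z > 0}"

definition hdist :: "complex \<Rightarrow> complex \<Rightarrow> real" where
  "hdist z w = arcosh (1 + (cmod (z - w))\<^sup>2 / (2 * Im z * Im w))"

text \<open>Elements of SL(2,R), written (a,b,c,d), acting by Moebius transformations.\<close>

type_synonym sl2 = "real \<times> real \<times> real \<times> real"

definition mob :: "sl2 \<Rightarrow> complex \<Rightarrow> complex" where
  "mob m z = (case m of (a,b,c,d) \<Rightarrow>
      (of_real a * z + of_real b) / (of_real c * z + of_real d))"

definition sl2_mult :: "sl2 \<Rightarrow> sl2 \<Rightarrow> sl2" where
  "sl2_mult m n = (case m of (a,b,c,d) \<Rightarrow> case n of (a',b',c',d') \<Rightarrow>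
      (a*a' + b*c', a*b' + b*d', c*a' + d*c', c*b' + d*d'))"

definition sl2_inv :: "sl2 \<Rightarrow> sl2" where
  "sl2_inv m = (case m of (a,b,c,d) \<Rightarrow> (d, -b, -c, a))"

definition sl2_one :: sl2 where
  "sl2_one = (1, 0, 0, 1)"

text \<open>A group of Moebius transformations uniformizing a closed hyperbolic surface
  S = H^2 / Gamma: a subgroup of SL(2,R) acting properly discontinuously (discretely),
  freely, and cocompactly on the hyperbolic plane.\<close>

definition closed_surface_group :: "sl2 set \<Rightarrow> bool" where
  "closed_surface_group G \<longleftrightarrow>
     (\<forall>m\<in>G. case m of (a,b,c,d) \<Rightarrow> a*d - b*c = 1) \<and>
     sl2_one \<in> G \<and>
     (\<forall>m\<in>G. \<forall>n\<in>G. sl2_mult m n \<in> G) \<and>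
     (\<forall>m\<in>G. sl2_inv m \<in> G) \<and>
     (\<forall>z\<in>hplane. \<forall>r. finite {m\<in>G. hdist z (mob m z) \<le> r}) \<and>
     (\<forall>m\<in>G. \<forall>z\<in>hplane. mob m z = z \<longrightarrow> (\<forall>w\<in>hplane. mob m w = w)) \<and>
     (\<exists>R. \<forall>z\<in>hplane. \<forall>w\<in>hplane. \<exists>m\<in>G. hdist z (mob m w) \<le> R)"

definition nontrivial_elt :: "sl2 \<Rightarrow> bool" where
  "nontrivial_elt m \<longleftrightarrow> (\<exists>z\<in>hplane. mob m z \<noteq> z)"

text \<open>Length of the shortest homotopically nontrivial closed curve on S = H^2/G
  (the systole): the infimum of displacements of nontrivial deck transformations.\<close>

definition systole :: "sl2 set \<Rightarrow> real" where
  "systole G = Inf {hdist z (mob m z) | m z. m \<in> G \<and> nontrivial_elt m \<and> z \<in> hplane}"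

definition unit_geodesic :: "(real \<Rightarrow> complex) \<Rightarrow> bool" where
  "unit_geodesic c \<longleftrightarrow> (\<forall>t. c t \<in> hplane) \<and> (\<forall>s t. hdist (c s) (c t) = \<bar>s - t\<bar>)"

definition trap :: "complex set \<Rightarrow> complex set \<Rightarrow> real \<Rightarrow> complex set" where
  "trap A B \<epsilon> = {x \<in> A. \<exists>y\<in>B. hdist x y < 2 * \<epsilon>}"

definition seg_length :: "complex set \<Rightarrow> real" where
  "seg_length X = Sup {hdist x y | x y. x \<in> X \<and> y \<in> X}"

end

theory Submission
  imports Defs
begin


definition det1 :: "sl2 \<Rightarrow> bool" where
  "det1 m = (case m of (a,b,c,d) \<Rightarrow> a*d - b*c = 1)"

definition hq :: "complex \<Rightarrow> complex \<Rightarrow> real" where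
  "hq z w = 1 + (cmod (z - w))\<^sup>2 / (2 * Im z * Im w)"

lemma hq_ge1: "Im z > 0 \<Longrightarrow> Im w > 0 \<Longrightarrow> hq z w \<ge> 1"
  unfolding hq_def by simp

lemma cosh_hdist: "Im z > 0 \<Longrightarrow> Im w > 0 \<Longrightarrow> cosh (hdist z w) = hq z w"
  unfolding hdist_def hq_def[symmetric] using hq_ge1 by simp

lemma hdist_nonneg: "Im z > 0 \<Longrightarrow> Im w > 0 \<Longrightarrow> hdist z w \<ge> 0"
  unfolding hdist_def hq_def[symmetric] using hq_ge1 by simp

lemma hdist_less_iff: "Im z > 0 \<Longrightarrow> Im w > 0 \<Longrightarrow> r \<ge> 0 \<Longrightarrow> hdist z w < r \<longleftrightarrow> hq z w < cosh r"
  by (metis cosh_hdist cosh_real_nonneg_less_iff hdist_nonneg)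

lemma hdist_eq_iff: "Im z > 0 \<Longrightarrow> Im w > 0 \<Longrightarrow> r \<ge> 0 \<Longrightarrow> hdist z w = r \<longleftrightarrow> hq z w = cosh r"
  by (metis cosh_hdist cosh_real_nonneg_le_iff hdist_nonneg order.antisym order_refl)

lemma hdist_self: "hdist z z = 0" unfolding hdist_def by simp

lemma hdist_sym: "hdist z w = hdist w z"
  unfolding hdist_def by (simp add: norm_minus_commute mult.commute mult.left_commute)

lemma mob_den_nz:
  assumes "a*d - b*c = 1" "Im z > 0"
  shows "of_real c * z + of_real d \<noteq> 0"
proof
  assume h: "of_real c * z + of_real d = 0"
  then have "Im (of_real c * z + of_real d) = 0" by simp
  then have "c = 0" using assms(2) by simp
  then have "d = 0" using h by simp
  then show False using assms(1) \<open>c = 0\<close> by simp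
qed

lemma mob_Im:
  assumes "a*d - b*c = 1" "Im z > 0"
  shows "Im (mob (a,b,c,d) z) = Im z / (cmod (of_real c * z + of_real d))\<^sup>2"
proof -
  have "(cmod (of_real c * z + of_real d))\<^sup>2 = (Re (of_real c * z + of_real d))\<^sup>2 + (Im (of_real c * z + of_real d))\<^sup>2"
    by (rule cmod_power2)
  moreover have "a * (d * Im z) - b * (c * Im z) = Im z" using assms(1) by (metis mult.assoc mult.commute mult_1 left_diff_distrib)
  ultimately show ?thesis unfolding mob_def
    by (simp add: Im_divide power2_eq_square algebra_simps)
qed

lemma mob_hplane:
  assumes "det1 m" "Im z > 0" shows "Im (mob m z) > 0"
proof -
  obtain a b c d where m: "m = (a,b,c,d)" by (cases m) auto
  have e: "a*d - b*c = 1" using assms(1) m by (simp add: det1_def)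
  have "of_real c * z + of_real d \<noteq> 0" using mob_den_nz[OF e assms(2)] .
  then show ?thesis using mob_Im[OF e assms(2)] m assms(2) by simp
qed

lemma mob_diff:
  assumes "a*d - b*c = 1" "Im z > 0" "Im w > 0"
  shows "mob (a,b,c,d) z - mob (a,b,c,d) w = (z - w) / ((of_real c * z + of_real d) * (of_real c * w + of_real d))"
proof -
  have nz: "of_real c * z + of_real d \<noteq> 0" "of_real c * w + of_real d \<noteq> 0"
    using mob_den_nz assms by blast+
  have e: "(of_real a * of_real d - of_real b * of_real c :: complex) = 1"
    using arg_cong[OF assms(1), of complex_of_real] by simp
  have num: "(of_real a * z + of_real b) * (of_real c * w + of_real d) - (of_real a * w + of_real b) * (of_real c * z + of_real d)
     = (of_real a * of_real d - of_real b * of_real c) * (z - w)"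
    by (simp add: algebra_simps)
  then have num': "(of_real a * z + of_real b) * (of_real c * w + of_real d) - (of_real a * w + of_real b) * (of_real c * z + of_real d) = z - w"
    using e by simp
  show ?thesis unfolding mob_def using nz
    by (simp add: diff_frac_eq num')
qed

lemma hq_mob:
  assumes "det1 m" "Im z > 0" "Im w > 0"
  shows "hq (mob m z) (mob m w) = hq z w"
proof -
  obtain a b c d where m: "m = (a,b,c,d)" by (cases m) auto
  have e: "a*d - b*c = 1" using assms(1) m by (simp add: det1_def)
  define Dz where "Dz = cmod (of_real c * z + of_real d)"
  define Dw where "Dw = cmod (of_real c * w + of_real d)"
  have pz: "Dz > 0" "Dw > 0" using mob_den_nz[OF e assms(2)] mob_den_nz[OF e assms(3)] Dz_def Dw_def by auto
  have "cmod (mob m z - mob m w) = cmod (z - w) / (Dz * Dw)"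
    using mob_diff[OF e assms(2,3)] m by (simp add: Dz_def Dw_def norm_divide norm_mult)
  moreover have "Im (mob m z) = Im z / Dz^2" "Im (mob m w) = Im w / Dw^2"
    using mob_Im[OF e assms(2)] mob_Im[OF e assms(3)] m Dz_def Dw_def by auto
  ultimately have "hq (mob m z) (mob m w) = 1 + (cmod (z - w) / (Dz * Dw))^2 / (2 * (Im z / Dz^2) * (Im w / Dw^2))"
    unfolding hq_def by simp
  also have "\<dots> = hq z w" unfolding hq_def using pz
    by (simp add: field_simps power2_eq_square)
  finally show ?thesis .
qed

lemma hdist_mob:
  assumes "det1 m" "Im z > 0" "Im w > 0"
  shows "hdist (mob m z) (mob m w) = hdist z w"
  using hq_mob[OF assms] unfolding hdist_def hq_def by simp

lemma det1_mult: assumes "det1 m" "det1 n" shows "det1 (sl2_mult m n)"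
proof -
  obtain a b c d where m: "m = (a,b,c,d)" by (cases m) auto
  obtain a' b' c' d' where n: "n = (a',b',c',d')" by (cases n) auto
  have "(a * a' + b * c') * (c * b' + d * d') - (a * b' + b * d') * (c * a' + d * c') = (a*d-b*c)*(a'*d'-b'*c')"
    by (simp add: algebra_simps)
  then show ?thesis using assms unfolding m n det1_def sl2_mult_def by simp
qed

lemma det1_inv: "det1 m \<Longrightarrow> det1 (sl2_inv m)"
  unfolding det1_def sl2_inv_def by (cases m) (simp add: mult.commute)

lemma frac_compose:
  fixes a b c d N D :: complex
  assumes "D \<noteq> 0"
  shows "(a * (N / D) + b) / (c * (N / D) + d) = (a * N + b * D) / (c * N + d * D)"
proof -
  have "a * (N / D) + b = (a * N + b * D) / D" "c * (N / D) + d = (c * N + d * D) / D"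
    using assms by (simp_all add: field_simps)
  then show ?thesis using assms by simp
qed

lemma mob_mult:
  assumes "det1 m" "det1 n" "Im z > 0"
  shows "mob (sl2_mult m n) z = mob m (mob n z)"
proof -
  obtain a b c d where m: "m = (a,b,c,d)" by (cases m) auto
  obtain a' b' c' d' where n: "n = (a',b',c',d')" by (cases n) auto
  have e': "a'*d' - b'*c' = 1" using assms(2) n by (simp add: det1_def)
  have nz: "of_real c' * z + of_real d' \<noteq> 0" using mob_den_nz[OF e' assms(3)] .
  have "mob m (mob n z) = (of_real a * (of_real a' * z + of_real b') + of_real b * (of_real c' * z + of_real d')) /
        (of_real c * (of_real a' * z + of_real b') + of_real d * (of_real c' * z + of_real d'))"
    unfolding m n mob_def using frac_compose[OF nz] by simp
  also have "\<dots> = mob (sl2_mult m n) z"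
    unfolding m n mob_def sl2_mult_def by (simp add: algebra_simps)
  finally show ?thesis by simp
qed

lemma mob_one: "mob sl2_one z = z"
  unfolding mob_def sl2_one_def by simp

lemma mob_inv_left:
  assumes "det1 m" "Im z > 0"
  shows "mob (sl2_inv m) (mob m z) = z"
proof -
  have "sl2_mult (sl2_inv m) m = sl2_one"
    using assms(1) unfolding det1_def sl2_mult_def sl2_inv_def sl2_one_def
    by (cases m) (auto simp: mult.commute)
  then show ?thesis using mob_mult[OF det1_inv[OF assms(1)] assms] mob_one by simp
qed

lemma mob_inv_right:
  assumes "det1 m" "Im z > 0"
  shows "mob m (mob (sl2_inv m) z) = z"
proof -
  have "sl2_mult m (sl2_inv m) = sl2_one"
    using assms(1) unfolding det1_def sl2_mult_def sl2_inv_def sl2_one_def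
    by (cases m) (auto simp: mult.commute)
  then show ?thesis using mob_mult[OF assms(1) det1_inv[OF assms(1)] assms(2)] mob_one by simp
qed

lemma hq_coords: "hq z w = 1 + ((Re z - Re w)^2 + (Im z - Im w)^2) / (2 * Im z * Im w)"
  unfolding hq_def by (simp add: cmod_power2)

lemma cosh_exp: "cosh (s::real) = (exp s + inverse (exp s)) / 2"
  by (simp add: cosh_def exp_minus)

lemma unit_geodesic_hq:
  assumes "unit_geodesic w"
  shows "hq (w s) (w t) = cosh (s - t)" "Im (w s) > 0"
proof -
  have "Im (w s) > 0" "Im (w t) > 0" using assms unfolding unit_geodesic_def hplane_def by auto
  moreover have "hdist (w s) (w t) = \<bar>s - t\<bar>" using assms unfolding unit_geodesic_def by auto
  ultimately show "hq (w s) (w t) = cosh (s - t)" "Im (w s) > 0"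
    using hdist_eq_iff[of "w s" "w t" "\<bar>s - t\<bar>"] by auto
qed

lemma C1:
  assumes "unit_geodesic w" "w 0 = \<i>" "w 1 = \<i> * of_real (exp 1)"
  shows "w s = \<i> * of_real (exp s)"
proof -
  define x where "x = Re (w s)"
  define y where "y = Im (w s)"
  define E where "E = exp s"
  define q where "q = exp (1::real)"
  have yp: "y > 0" using unit_geodesic_hq(2)[OF assms(1)] y_def by auto
  have Ep: "E > 0" "q > 1" using E_def q_def by auto
  have h1: "hq (w s) (w 0) = cosh s" using unit_geodesic_hq(1)[OF assms(1), of s 0] by simp
  have h2: "hq (w s) (w 1) = cosh (s - 1)" using unit_geodesic_hq(1)[OF assms(1), of s 1] by simp
  have c1: "cosh s = (E + inverse E) / 2" using cosh_exp E_def by simp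
  have c2: "cosh (s - 1) = (E / q + q / E) / 2" using cosh_exp[of "s-1"] E_def q_def
    by (simp add: exp_diff field_simps)
  have e1: "x^2 + y^2 + 1 = y * (E + inverse E)"
    using h1 c1 yp Ep unfolding hq_coords assms(2) x_def[symmetric] y_def[symmetric]
    by (simp add: field_simps power2_eq_square)
  have "2*q*(E*(q^2+x^2+y^2)) = 2*q*(E^2*y + q^2*y)"
    using h2 c2 yp Ep unfolding hq_coords assms(3) x_def[symmetric] y_def[symmetric] q_def[symmetric]
    by (simp add: field_simps power2_eq_square)
  then have "E*(q^2+x^2+y^2) = E^2*y + q^2*y" using Ep by simp
  then have e2: "x^2 + y^2 + q^2 = y * (E + q^2 / E)"
    using Ep by (simp add: field_simps power2_eq_square)
  have "q^2 - 1 = y * (q^2 - 1) / E" using e1 e2 Ep by (simp add: field_simps)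
  then have "E * (q^2 - 1) = y * (q^2 - 1)" using Ep by (simp add: field_simps)
  moreover have "q^2 - 1 \<noteq> 0" using Ep
    by (metis less_irrefl one_less_power pos2 right_minus_eq)
  ultimately have yE: "y = E" by simp
  then have "x^2 = 0" using e1 Ep by (simp add: field_simps power2_eq_square)
  then have "x = 0" by simp
  then show ?thesis using yE x_def y_def E_def by (simp add: complex_eq_iff)
qed

lemma unit_geodesic_mob:
  assumes "det1 M" "unit_geodesic w"
  shows "unit_geodesic (\<lambda>s. mob M (w s))"
  using assms hdist_mob mob_hplane unfolding unit_geodesic_def hplane_def by auto

definition rot :: "real \<Rightarrow> real \<Rightarrow> sl2" where "rot a b = (a, b, -b, a)"

lemma det1_rot: "a^2 + b^2 = 1 \<Longrightarrow> det1 (rot a b)"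
  unfolding det1_def rot_def by (simp add: power2_eq_square)

lemma rot_i: "a^2 + b^2 = 1 \<Longrightarrow> mob (rot a b) \<i> = \<i>"
proof -
  assume h: "a^2 + b^2 = 1"
  have nz: "of_real (-b) * \<i> + of_real a \<noteq> 0" using mob_den_nz[of a a b "-b" \<i>] h
    by (simp add: power2_eq_square)
  have "of_real a * \<i> + of_real b = \<i> * (of_real (-b) * \<i> + of_real a)"
    by (simp add: algebra_simps)
  then show ?thesis unfolding mob_def rot_def using nz by simp
qed

lemma to_i: assumes "Im z0 > 0" shows "\<exists>M. det1 M \<and> mob M z0 = \<i>"
proof -
  define y where "y = Im z0"
  define x where "x = Re z0"
  have yp: "y > 0" using assms y_def by simp
  define M where "M = (1 / sqrt y, - x / sqrt y, 0::real, sqrt y)"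
  have "det1 M" unfolding M_def det1_def using yp by simp
  moreover have "mob M z0 = \<i>"
  proof -
    have sy: "sqrt y > 0" using yp by simp
    have "mob M z0 = (of_real (1/sqrt y) * z0 + of_real (-x/sqrt y)) / of_real (sqrt y)"
      unfolding M_def mob_def by simp
    also have "\<dots> = (z0 - of_real x) / (of_real (sqrt y) * of_real (sqrt y))"
    proof -
      have nz: "(of_real (sqrt y) :: complex) \<noteq> 0" using sy by simp
      have "of_real (1/sqrt y) * z0 + of_real (-x/sqrt y) = (z0 - of_real x) / of_real (sqrt y)"
        using nz by (simp add: field_simps)
      then show ?thesis by simp
    qed
    also have "\<dots> = (z0 - of_real x) / of_real y"
      using yp by (simp flip: of_real_mult)
    also have "\<dots> = \<i>" using yp x_def y_def by (simp add: complex_eq_iff Re_divide Im_divide power2_eq_square)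
    finally show ?thesis .
  qed
  ultimately show ?thesis by blast
qed



lemma rot_axis:
  assumes "Im u > 0"
  shows "\<exists>a b. a^2 + b^2 = 1 \<and> Re (mob (rot a b) u) = 0"
proof -
  define x where "x = Re u"
  define m where "m = (1 - (cmod u)^2) / 2"
  show ?thesis
  proof (cases "x^2 + m^2 = 0")
    case True
    then have "x = 0" by (simp add: sum_power2_eq_zero_iff)
    then show ?thesis
      apply (rule_tac x=1 in exI, rule_tac x=0 in exI)
      by (simp add: rot_def mob_def x_def)
  next
    case False
    define r where "r = sqrt (x^2 + m^2)"
    have rp: "r > 0" using False r_def
      by (metis add_nonneg_nonneg real_sqrt_gt_0_iff zero_le_power2 order_le_less)
    have r2: "r^2 = x^2 + m^2" by (simp add: r_def)
    have "(m / r)^2 + (- x / r)^2 = (m^2 + x^2) / r^2" by (simp add: power_divide add_divide_distrib)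
    then have "(m / r)^2 + (- x / r)^2 = 1" using r2 rp False by (simp add: add.commute)
    then obtain t where t: "m / r = cos t" "- x / r = sin t" by (rule sincos_total_2pi)
    define a where "a = cos (t/2)"
    define b where "b = sin (t/2)"
    have ab: "a^2 + b^2 = 1" unfolding a_def b_def by simp
    have c2: "a^2 - b^2 = m / r" using cos_double[of "t/2"] t a_def b_def by simp
    have s2: "2 * a * b = - x / r" using sin_double[of "t/2"] t a_def b_def by (simp add: mult.commute)
    have "(a^2 - b^2) * x + a * b * (2 * m) = (m/r) * x + (2*a*b) * m" by (simp add: c2)
    then have key: "(a^2 - b^2) * x + a * b * (2 * m) = 0" using s2 by simp
    have nz: "of_real (-b) * u + of_real a \<noteq> 0" using mob_den_nz[of a a b "-b" u] ab assms
      by (simp add: power2_eq_square)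
    have "Re ((of_real a * u + of_real b) * cnj (of_real (-b) * u + of_real a)) = (a^2 - b^2) * x + a * b * (2 * m)"
    proof -
      have cu: "(cmod u)^2 = (Re u)^2 + (Im u)^2" by (rule cmod_power2)
      show ?thesis unfolding m_def x_def cu by (simp add: power2_eq_square algebra_simps add_divide_distrib diff_divide_distrib)
    qed
    then have "Re ((of_real a * u + of_real b) * cnj (of_real (-b) * u + of_real a)) = 0" using key by simp
    then have "Re ((of_real a * u + of_real b) / (of_real (-b) * u + of_real a)) = 0"
      by (simp add: Re_divide)
    then show ?thesis using ab unfolding rot_def mob_def by auto
  qed
qed

lemma axis_dist1:
  assumes "Re v = 0" "Im v > 0" "hq \<i> v = cosh 1"
  shows "v = \<i> * of_real (exp 1) \<or> v = \<i> * of_real (inverse (exp 1))"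
proof -
  define Y where "Y = Im v"
  define q where "q = exp (1::real)"
  have Yp: "Y > 0" "q > 0" using assms Y_def q_def by auto
  have "1 + (1 - Y)^2 / (2 * Y) = (q + inverse q) / 2"
    using assms(3) unfolding hq_coords cosh_exp q_def[symmetric] Y_def[symmetric] using assms(1) by simp
  then have "2 * Y * q + q * (1 - Y)^2 = Y * (q * q + 1)"
    using Yp by (simp add: field_simps)
  then have "(Y - q) * (q * Y - 1) = 0" by (simp add: algebra_simps power2_eq_square)
  then have "Y - q = 0 \<or> q * Y - 1 = 0" by simp
  then have "Y = q \<or> Y = inverse q" using Yp by (auto simp: field_simps)
  then show ?thesis using assms(1) Y_def q_def by (auto simp: complex_eq_iff power2_eq_square inverse_eq_divide)
qed

lemma J_inv_e: "mob (rot 0 1) (\<i> * of_real (inverse (exp 1))) = \<i> * of_real (exp 1)"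
  unfolding mob_def rot_def by (simp add: field_simps)

lemma geo_from:
  assumes "det1 K" "unit_geodesic w" "\<forall>s. mob K (w s) = \<i> * of_real (exp s)"
  shows "\<exists>M. det1 M \<and> (\<forall>s. w s = mob M (\<i> * of_real (exp s)))"
proof (intro exI[of _ "sl2_inv K"] conjI allI)
  show "det1 (sl2_inv K)" using det1_inv assms(1) by blast
  fix s
  have "Im (w s) > 0" using assms(2) unfolding unit_geodesic_def hplane_def by auto
  then show "w s = mob (sl2_inv K) (\<i> * of_real (exp s))"
    using mob_inv_left[OF assms(1)] assms(3) by metis
qed

lemma geodesic_class:
  assumes "unit_geodesic w"
  shows "\<exists>M. det1 M \<and> (\<forall>s. w s = mob M (\<i> * of_real (exp s)))"
proof -
  have w0: "Im (w 0) > 0" using assms unfolding unit_geodesic_def hplane_def by auto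
  obtain M0 where M0: "det1 M0" "mob M0 (w 0) = \<i>" using to_i[OF w0] by blast
  define w1 where "w1 = (\<lambda>s. mob M0 (w s))"
  have g1: "unit_geodesic w1" unfolding w1_def using unit_geodesic_mob[OF M0(1) assms] .
  have u: "Im (w1 1) > 0" using g1 unfolding unit_geodesic_def hplane_def by auto
  obtain a b where ab: "a^2 + b^2 = 1" "Re (mob (rot a b) (w1 1)) = 0" using rot_axis[OF u] by blast
  define R where "R = rot a b"
  have dR: "det1 R" using det1_rot[OF ab(1)] R_def by simp
  define w2 where "w2 = (\<lambda>s. mob R (w1 s))"
  have g2: "unit_geodesic w2" unfolding w2_def using unit_geodesic_mob[OF dR g1] .
  have w20: "w2 0 = \<i>" unfolding w2_def w1_def using M0(2) rot_i[OF ab(1)] R_def by simp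
  have "hq (w2 1) (w2 0) = cosh 1" using unit_geodesic_hq(1)[OF g2, of 1 0] by simp
  then have "hq \<i> (w2 1) = cosh 1" using w20 unfolding hq_def
    by (simp add: norm_minus_commute mult.commute mult.left_commute)
  moreover have "Re (w2 1) = 0" using ab(2) R_def w2_def by simp
  moreover have "Im (w2 1) > 0" using g2 unfolding unit_geodesic_def hplane_def by auto
  ultimately have cases: "w2 1 = \<i> * of_real (exp 1) \<or> w2 1 = \<i> * of_real (inverse (exp 1))"
    using axis_dist1 by blast
  define K where "K = sl2_mult R M0"
  have dK: "det1 K" using K_def det1_mult dR M0(1) by blast
  have Kw: "\<forall>s. mob K (w s) = w2 s"
  proof
    fix s
    have "Im (w s) > 0" using assms unfolding unit_geodesic_def hplane_def by auto
    then show "mob K (w s) = w2 s" unfolding K_def w2_def w1_def using mob_mult[OF dR M0(1)] by simp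
  qed
  show ?thesis
  proof (cases "w2 1 = \<i> * of_real (exp 1)")
    case True
    then have "\<forall>s. w2 s = \<i> * of_real (exp s)" using C1[OF g2 w20] by blast
    then show ?thesis using geo_from[OF dK assms] Kw by simp
  next
    case False
    then have w21: "w2 1 = \<i> * of_real (inverse (exp 1))" using cases by blast
    have dJ: "det1 (rot 0 1)" using det1_rot[of 0 1] by simp
    define w3 where "w3 = (\<lambda>s. mob (rot 0 1) (w2 s))"
    have g3: "unit_geodesic w3" unfolding w3_def using unit_geodesic_mob[OF dJ g2] .
    have w30: "w3 0 = \<i>" unfolding w3_def w20 using rot_i[of 0 1] by simp
    have w31: "w3 1 = \<i> * of_real (exp 1)" unfolding w3_def w21 using J_inv_e by simp
    have all3: "\<forall>s. w3 s = \<i> * of_real (exp s)" using C1[OF g3 w30 w31] by blast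
    define K' where "K' = sl2_mult (rot 0 1) K"
    have dK': "det1 K'" using K'_def det1_mult dJ dK by blast
    have "\<forall>s. mob K' (w s) = w3 s"
    proof
      fix s
      have "Im (w s) > 0" using assms unfolding unit_geodesic_def hplane_def by auto
      then show "mob K' (w s) = w3 s" unfolding K'_def w3_def using mob_mult[OF dJ dK] Kw by simp
    qed
    then show ?thesis using geo_from[OF dK' assms] all3 by simp
  qed
qed



lemma rot_gp:
  assumes "a^2 + b^2 = 1" "E > 0"
  shows "mob (rot a b) (\<i> * of_real E) = Complex (a*b*(1-E^2)/(a^2+b^2*E^2)) (E/(a^2+b^2*E^2))"
proof -
  have dpos: "a^2 + b^2*E^2 > 0"
  proof -
    have "a \<noteq> 0 \<or> b * E \<noteq> 0" using assms by auto
    then have "a^2 + (b*E)^2 > 0" by (simp add: sum_power2_gt_zero_iff)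
    then show ?thesis by (simp add: power_mult_distrib)
  qed
  have nz: "(of_real (-b) * (\<i> * of_real E) + of_real a :: complex) \<noteq> 0"
    using mob_den_nz[of a a b "-b" "\<i> * of_real E"] assms by (simp add: power2_eq_square)
  show ?thesis unfolding mob_def rot_def using dpos assms(1)
    by (simp add: complex_eq_iff Re_divide Im_divide power2_eq_square algebra_simps)
       (metis distrib_left mult_1_right)
qed

lemma PQ_pos: fixes a b E :: real shows "a^2 + b^2 = 1 \<Longrightarrow> E > 0 \<Longrightarrow> a^2 + b^2*E^2 > 0"
proof -
  assume ab: "a^2 + b^2 = 1" and E: "E > 0"
  show ?thesis
  proof (cases "a = 0")
    case True
    then have "b^2 = 1" using ab by simp
    then have "b \<noteq> 0" by auto
    then have "b^2*E^2 > 0" using E by simp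
    then show ?thesis using True by simp
  next
    case False
    then have "a^2 > 0" by simp
    moreover have "b^2*E^2 \<ge> 0" by simp
    ultimately show ?thesis by linarith
  qed
qed

lemma disp_general:
  assumes ab: "a^2 + b^2 = 1" and E: "E > 0" and lam: "L > 0"
  defines "P \<equiv> a^2*E^2 + b^2" and "Q \<equiv> a^2 + b^2*E^2"
  shows "hq (mob (rot a b) (\<i> * of_real (inverse E))) (of_real L * mob (rot a b) (\<i> * of_real E))
       = 1 + ((a*b*(E^2-1))^2*(Q+L*P)^2 + E^2*(Q-L*P)^2)/(2*L*E^2*P*Q)"
proof -
  have Qp: "Q > 0" using PQ_pos[OF ab E] Q_def by simp
  have P1: "a^2 + b^2 * (inverse E)^2 = P / E^2" using E unfolding P_def by (simp add: field_simps)
  have Pp: "P > 0" using PQ_pos[OF ab, of "inverse E"] E P1 by (simp add: field_simps)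
  have w1: "mob (rot a b) (\<i> * of_real (inverse E)) = Complex (a*b*(E^2-1)/P) (E/P)"
  proof -
    have e1: "1 - (inverse E)^2 = (E^2 - 1) / E^2" using E by (simp add: field_simps power2_eq_square)
    have "a*b*(1-(inverse E)^2)/(a^2+b^2*(inverse E)^2) = a*b*((E^2 - 1) / E^2) / (P / E^2)"
      unfolding P1 e1 by simp
    also have "\<dots> = a*b*(E^2-1)/P" using E Pp by (simp add: field_simps)
    finally have r: "a*b*(1-(inverse E)^2)/(a^2+b^2*(inverse E)^2) = a*b*(E^2-1)/P" .
    have "inverse E/(a^2+b^2*(inverse E)^2) = inverse E / (P / E^2)" unfolding P1 by simp
    also have "\<dots> = E / P" using E by (simp add: field_simps power2_eq_square)
    finally have i: "inverse E/(a^2+b^2*(inverse E)^2) = E / P" .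
    show ?thesis using rot_gp[OF ab, of "inverse E"] E r i by simp
  qed
  have w2: "of_real L * mob (rot a b) (\<i> * of_real E) = Complex (-L*a*b*(E^2-1)/Q) (L*E/Q)"
    using rot_gp[OF ab E] unfolding Q_def[symmetric] by (simp add: complex_eq_iff field_simps)
  have "hq (Complex (a*b*(E^2-1)/P) (E/P)) (Complex (-L*a*b*(E^2-1)/Q) (L*E/Q))
     = 1 + ((a*b*(E^2-1)/P + L*a*b*(E^2-1)/Q)^2 + (E/P - L*E/Q)^2) / (2*(E/P)*(L*E/Q))"
    unfolding hq_coords by simp
  also have "\<dots> = 1 + ((a*b*(E^2-1))^2*(Q+L*P)^2 + E^2*(Q-L*P)^2)/(2*L*E^2*P*Q)"
    using Pp Qp E lam by (simp add: field_simps power2_eq_square)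
  finally show ?thesis using w1 w2 by simp
qed

lemma disp_case1:
  assumes ab: "a^2 + b^2 = 1" and E: "E > 0"
  shows "hq (mob (rot a b) (\<i> * of_real (inverse E))) (of_real (inverse (E^2)) * mob (rot a b) (\<i> * of_real E))
       = 1 + b^2*(E^2-1)^2*(4*E^2+b^2*(E^2-1)^2)/(2*E^4)"
proof -
  define P where "P = a^2*E^2 + b^2"
  define Q where "Q = a^2 + b^2*E^2"
  have Qp: "Q > 0" using PQ_pos[OF ab E] Q_def by simp
  have P1: "a^2 + b^2 * (inverse E)^2 = P / E^2" using E unfolding P_def by (simp add: field_simps)
  have Pp: "P > 0" using PQ_pos[OF ab, of "inverse E"] E P1 by (simp add: field_simps)
  have a2: "a^2 = 1 - b^2" using ab by simp
  have id: "(1-b^2)*b^2*(E^2-1)^2*(E^2*((1-b^2)+b^2*E^2) + ((1-b^2)*E^2+b^2))^2 + E^2*(E^2*((1-b^2)+b^2*E^2) - ((1-b^2)*E^2+b^2))^2 = ((1-b^2)*E^2+b^2)*((1-b^2)+b^2*E^2)*b^2*(E^2-1)^2*(4*E^2+b^2*(E^2-1)^2)"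
    by algebra
  have "((a*b*(E^2-1))^2*(Q+inverse (E^2)*P)^2 + E^2*(Q-inverse (E^2)*P)^2)/(2*inverse (E^2)*E^2*P*Q)
      = ((a^2*b^2*(E^2-1)^2*(E^2*Q+P)^2 + E^2*(E^2*Q-P)^2)/E^4)/(2*P*Q)"
    using E Pp Qp by (simp add: field_simps power2_eq_square, algebra)
  also have "\<dots> = (P*Q*b^2*(E^2-1)^2*(4*E^2+b^2*(E^2-1)^2)/E^4)/(2*P*Q)"
  proof -
    have "a^2*b^2*(E^2-1)^2*(E^2*Q+P)^2 + E^2*(E^2*Q-P)^2 = P*Q*b^2*(E^2-1)^2*(4*E^2+b^2*(E^2-1)^2)"
      unfolding P_def Q_def a2 by (rule id)
    then show ?thesis by simp
  qed
  also have "\<dots> = b^2*(E^2-1)^2*(4*E^2+b^2*(E^2-1)^2)/(2*E^4)"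
    using Pp Qp E by (simp add: field_simps)
  finally show ?thesis using disp_general[OF ab E, of "inverse (E^2)"] E P_def Q_def by simp
qed

lemma disp_case2:
  assumes ab: "a^2 + b^2 = 1" and E: "E > 0"
  shows "hq (mob (rot a b) (\<i> * of_real (inverse E))) (of_real (E^2) * mob (rot a b) (\<i> * of_real E))
       = 1 + a^2*(E^2-1)^2*(4*E^2+a^2*(E^2-1)^2)/(2*E^4)"
proof -
  define P where "P = a^2*E^2 + b^2"
  define Q where "Q = a^2 + b^2*E^2"
  have Qp: "Q > 0" using PQ_pos[OF ab E] Q_def by simp
  have P1: "a^2 + b^2 * (inverse E)^2 = P / E^2" using E unfolding P_def by (simp add: field_simps)
  have Pp: "P > 0" using PQ_pos[OF ab, of "inverse E"] E P1 by (simp add: field_simps)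
  have b2: "b^2 = 1 - a^2" using ab by simp
  have id: "a^2*(1-a^2)*(E^2-1)^2*((a^2+(1-a^2)*E^2)+E^2*(a^2*E^2+(1-a^2)))^2 + E^2*((a^2+(1-a^2)*E^2)-E^2*(a^2*E^2+(1-a^2)))^2 = (a^2*E^2+(1-a^2))*(a^2+(1-a^2)*E^2)*a^2*(E^2-1)^2*(4*E^2+a^2*(E^2-1)^2)"
    by algebra
  have "((a*b*(E^2-1))^2*(Q+E^2*P)^2 + E^2*(Q-E^2*P)^2)/(2*E^2*E^2*P*Q)
      = ((a^2*b^2*(E^2-1)^2*(Q+E^2*P)^2 + E^2*(Q-E^2*P)^2)/E^4)/(2*P*Q)"
    using E Pp Qp by (simp add: field_simps power2_eq_square, algebra)
  also have "\<dots> = (P*Q*a^2*(E^2-1)^2*(4*E^2+a^2*(E^2-1)^2)/E^4)/(2*P*Q)"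
  proof -
    have "a^2*b^2*(E^2-1)^2*(Q+E^2*P)^2 + E^2*(Q-E^2*P)^2 = P*Q*a^2*(E^2-1)^2*(4*E^2+a^2*(E^2-1)^2)"
      unfolding P_def Q_def b2 by (rule id)
    then show ?thesis by simp
  qed
  also have "\<dots> = a^2*(E^2-1)^2*(4*E^2+a^2*(E^2-1)^2)/(2*E^4)"
    using Pp Qp E by (simp add: field_simps)
  finally show ?thesis using disp_general[OF ab E, of "E^2"] E P_def Q_def by simp
qed

lemma axis_bound:
  assumes "Im z > 0" "y > 0"
  shows "(hq z (\<i> * of_real y))^2 \<ge> 1 + (Re z / Im z)^2"
proof -
  define X where "X = Re z"
  define Y where "Y = Im z"
  have Yp: "Y > 0" using assms Y_def by simp
  have h: "hq z (\<i> * of_real y) = (X^2 + Y^2 + y^2) / (2*Y*y)"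
    unfolding hq_coords X_def[symmetric] Y_def[symmetric] using Yp assms(2)
    by (simp add: field_simps power2_eq_square)
  have "(X^2 + Y^2 + y^2)^2 \<ge> 4*y^2*(X^2+Y^2)"
  proof -
    have "(X^2 + Y^2 + y^2)^2 - 4*y^2*(X^2+Y^2) = (X^2+Y^2-y^2)^2" by (simp add: power2_eq_square algebra_simps)
    then show ?thesis by (metis diff_ge_0_iff_ge zero_le_power2)
  qed
  then have "((X^2 + Y^2 + y^2) / (2*Y*y))^2 \<ge> (4*y^2*(X^2+Y^2))/(2*Y*y)^2"
    by (simp add: power_divide divide_right_mono)
  moreover have "(4*y^2*(X^2+Y^2))/(2*Y*y)^2 = 1 + (X/Y)^2"
    using Yp assms(2) by (simp add: field_simps power2_eq_square)
  ultimately show ?thesis using h X_def Y_def by simp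
qed

lemma rot_ratio:
  assumes "a^2 + b^2 = 1"
  shows "(Re (mob (rot a b) (\<i> * of_real (exp t))) / Im (mob (rot a b) (\<i> * of_real (exp t))))^2 = 4*a^2*b^2*(sinh t)^2"
proof -
  define E where "E = exp t"
  have Ep: "E > 0" using E_def by simp
  have dp: "a^2 + b^2*E^2 > 0" using PQ_pos[OF assms Ep] .
  have "Re (mob (rot a b) (\<i> * of_real E)) / Im (mob (rot a b) (\<i> * of_real E)) = a*b*(1-E^2)/E"
    using rot_gp[OF assms Ep] dp Ep by simp
  moreover have "a*b*(1-E^2)/E = -(2*a*b) * ((E - inverse E)/2)" using Ep
    by (simp add: field_simps power2_eq_square)
  moreover have "sinh t = (E - inverse E)/2" using E_def by (simp add: sinh_def exp_minus)
  ultimately have "Re (mob (rot a b) (\<i> * of_real E)) / Im (mob (rot a b) (\<i> * of_real E)) = -(2*a*b) * sinh t"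
    by simp
  then show ?thesis unfolding E_def[symmetric]
    by (simp add: power_mult_distrib)
qed

lemma trap_cond:
  assumes "a^2 + b^2 = 1" "y > 0" "hq (mob (rot a b) (\<i> * of_real (exp t))) (\<i> * of_real y) < cosh r"
  shows "4*a^2*b^2*(sinh t)^2 < (sinh r)^2"
proof -
  define w where "w = mob (rot a b) (\<i> * of_real (exp t))"
  have dr: "det1 (rot a b)" using det1_rot[OF assms(1)] .
  have wp: "Im w > 0" unfolding w_def by (rule mob_hplane[OF dr]) simp
  have h1: "hq w (\<i> * of_real y) \<ge> 1" using hq_ge1 wp assms(2) by simp
  have "(hq w (\<i> * of_real y))^2 < (cosh r)^2"
    using assms(3) h1 unfolding w_def[symmetric] by (intro power_strict_mono) auto
  then have "1 + (Re w / Im w)^2 < (cosh r)^2" using axis_bound[OF wp assms(2)] by simp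
  then show ?thesis using rot_ratio[OF assms(1), of t] unfolding w_def[symmetric]
    by (simp add: cosh_square_eq)
qed

definition Dm :: "real \<Rightarrow> sl2" where "Dm u = (exp (u/2), 0, 0, exp (-(u/2)))"

lemma det1_Dm: "det1 (Dm u)" unfolding det1_def Dm_def by (simp add: exp_minus)

lemma mob_Dm: "mob (Dm u) z = of_real (exp u) * z"
proof -
  have "exp (u/2) / exp (-(u/2)) = exp u" by (simp add: exp_minus exp_add[symmetric] field_simps flip: exp_add)
  then have "(of_real (exp (u/2)) :: complex) / of_real (exp (-(u/2))) = of_real (exp u)"
    by (metis of_real_divide)
  then show ?thesis unfolding Dm_def mob_def by (simp add: field_simps)
qed

lemma stab_i:
  assumes "det1 m" "mob m \<i> = \<i>"
  shows "\<exists>a b. a^2 + b^2 = 1 \<and> m = rot a b"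
proof -
  obtain a b c d where m: "m = (a,b,c,d)" by (cases m) auto
  have e: "a*d - b*c = 1" using assms(1) m by (simp add: det1_def)
  have nz: "of_real c * \<i> + of_real d \<noteq> 0" using mob_den_nz[OF e] by simp
  have "of_real a * \<i> + of_real b = \<i> * (of_real c * \<i> + of_real d)"
    using assms(2) nz unfolding m mob_def by (simp add: divide_eq_eq)
  then have "b = -c" "a = d" by (simp_all add: complex_eq_iff)
  then show ?thesis using e m unfolding rot_def by (intro exI[of _ a] exI[of _ b]) (auto simp: power2_eq_square)
qed

lemma fix_axis:
  assumes "det1 m" "\<forall>s. mob m (\<i> * of_real (exp s)) = \<i> * of_real (exp (s + l))"
  shows "mob m z = of_real (exp l) * z"
proof -
  obtain a b c d where m: "m = (a,b,c,d)" by (cases m) auto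
  have e: "a*d - b*c = 1" using assms(1) m by (simp add: det1_def)
  define L where "L = exp l"
  have eq: "of_real a * (\<i> * of_real (exp s)) + of_real b = \<i> * of_real (L * exp s) * (of_real c * (\<i> * of_real (exp s)) + of_real d)"
    for s
  proof -
    have nz: "of_real c * (\<i> * of_real (exp s)) + of_real d \<noteq> 0" using mob_den_nz[OF e] by simp
    have "mob m (\<i> * of_real (exp s)) = \<i> * of_real (L * exp s)"
      using assms(2) L_def by (simp add: exp_add mult.commute)
    then show ?thesis using nz unfolding m mob_def by (simp add: divide_eq_eq)
  qed
  have r1: "b = - L * c" using eq[of 0] by (simp add: complex_eq_iff)
  have r2: "b = - L * c * (exp 1)^2" using eq[of 1] by (simp add: complex_eq_iff power2_eq_square)
  have Lp: "L > 0" using L_def by simp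
  have q0: "(exp (1::real))^2 > 1" by simp
  then have q: "(exp (1::real))^2 - 1 > 0" by linarith
  have "L * c * ((exp 1)^2 - 1) = 0" using r1 r2 by (simp add: algebra_simps)
  then have c0: "c = 0" using Lp q by simp
  then have b0: "b = 0" using r1 by simp
  have ad: "a = L * d" using eq[of 0] by (simp add: complex_eq_iff)
  have dnz: "d \<noteq> 0" using e c0 by auto
  have "mob m z = (of_real a * z) / of_real d" unfolding m mob_def using c0 b0 by simp
  also have "\<dots> = of_real L * z" using ad dnz by simp
  finally show ?thesis using L_def by simp
qed



definition gp :: "real \<Rightarrow> complex" where "gp t = \<i> * of_real (exp t)"

lemma gp_Im: "Im (gp t) > 0" unfolding gp_def by simp
lemma gp_0: "gp 0 = \<i>" unfolding gp_def by simp
lemma mob_Dm_gp: "mob (Dm u) (gp t) = gp (t + u)"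
  unfolding gp_def mob_Dm by (simp add: exp_add)

lemma csg_det1: "closed_surface_group G \<Longrightarrow> m \<in> G \<Longrightarrow> det1 m"
  unfolding closed_surface_group_def det1_def by auto
lemma csg_mult: "closed_surface_group G \<Longrightarrow> m \<in> G \<Longrightarrow> n \<in> G \<Longrightarrow> sl2_mult m n \<in> G"
  unfolding closed_surface_group_def by auto
lemma csg_inv: "closed_surface_group G \<Longrightarrow> m \<in> G \<Longrightarrow> sl2_inv m \<in> G"
  unfolding closed_surface_group_def by auto

lemma systole_le:
  assumes "closed_surface_group G" "k \<in> G" "nontrivial_elt k" "Im z > 0"
  shows "systole G \<le> hdist z (mob k z)"
proof -
  have dk: "det1 k" using csg_det1 assms by blast
  have kz: "Im (mob k z) > 0" using mob_hplane[OF dk assms(4)] .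
  have mem: "hdist z (mob k z) \<in> {hdist z (mob m z) | m z. m \<in> G \<and> nontrivial_elt m \<and> z \<in> hplane}"
    using assms(2,3,4) unfolding hplane_def by blast
  have "bdd_below {hdist z (mob m z) | m z. m \<in> G \<and> nontrivial_elt m \<and> z \<in> hplane}"
  proof (rule bdd_belowI[of _ 0])
    fix x assume "x \<in> {hdist z (mob m z) | m z. m \<in> G \<and> nontrivial_elt m \<and> z \<in> hplane}"
    then obtain m w where x: "x = hdist w (mob m w)" "m \<in> G" "w \<in> hplane" by blast
    have "det1 m" using csg_det1 assms(1) x(2) by blast
    then show "0 \<le> x" using x hdist_nonneg mob_hplane unfolding hplane_def by auto
  qed
  then show ?thesis unfolding systole_def using mem by (rule cInf_lower[rotated])
qed

lemma cosh_4: "cosh (4 * (y::real)) = 1 + 8 * (sinh y)^2 * (1 + (sinh y)^2)"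
proof -
  have c2: "cosh (2 * x) = 1 + 2 * (sinh x)^2" for x :: real
    using cosh_double[of x] cosh_square_eq[of x] by simp
  have "cosh (4 * y) = cosh (2 * (2 * y))" by simp
  also have "\<dots> = 1 + 2 * (sinh (2 * y))^2" by (rule c2)
  also have "sinh (2 * y) = 2 * sinh y * cosh y" by (rule sinh_double)
  finally have "cosh (4 * y) = 1 + 8 * (sinh y)^2 * (cosh y)^2"
    by (simp add: power_mult_distrib)
  then show ?thesis using cosh_square_eq[of y] by simp
qed

lemma disp_sinh:
  fixes E l c :: real
  assumes "E = exp (l/2)"
  shows "c^2*(E^2-1)^2*(4*E^2+c^2*(E^2-1)^2)/(2*E^4) = 8 * (c^2 * (sinh (l/2))^2) * (1 + c^2 * (sinh (l/2))^2)"
proof -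
  have Ep: "E > 0" using assms by simp
  have sh: "sinh (l/2) = (E - inverse E) / 2" using assms by (simp add: sinh_def exp_minus)
  have sq: "(sinh (l/2))^2 = (E^2-1)^2/(4*E^2)" unfolding sh using Ep
    by (simp add: field_simps power2_eq_square)
  show ?thesis unfolding sq using Ep by (simp add: field_simps power2_eq_square, algebra)
qed



lemma reparam:
  assumes "det1 h" "det1 M" "\<forall>s. c s = mob M (gp s)"
  shows "\<exists>A. det1 A \<and> (\<forall>t. mob A (gp t) = mob h (c (t + s0)))"
proof -
  define A where "A = sl2_mult (sl2_mult h M) (Dm s0)"
  have dA: "det1 A" unfolding A_def using det1_mult det1_Dm assms by blast
  have "mob A (gp t) = mob h (c (t + s0))" for t
  proof -
    have "mob A (gp t) = mob (sl2_mult h M) (mob (Dm s0) (gp t))"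
      unfolding A_def using mob_mult[OF det1_mult[OF assms(1,2)] det1_Dm gp_Im] .
    also have "\<dots> = mob h (mob M (gp (t + s0)))"
      using mob_mult[OF assms(1,2) gp_Im] mob_Dm_gp by simp
    finally show ?thesis using assms(3) by simp
  qed
  then show ?thesis using dA by blast
qed

lemma conj_tr:
  assumes "det1 h" "det1 g" "\<forall>t. mob g (c t) = c (t + l)" "\<forall>t. Im (c t) > 0"
  shows "mob (sl2_mult (sl2_mult h g) (sl2_inv h)) (mob h (c u)) = mob h (c (u + l))"
proof -
  have hc: "Im (mob h (c u)) > 0" using mob_hplane assms by blast
  have "mob (sl2_mult (sl2_mult h g) (sl2_inv h)) (mob h (c u)) = mob (sl2_mult h g) (mob (sl2_inv h) (mob h (c u)))"
    using mob_mult[OF det1_mult[OF assms(1,2)] det1_inv[OF assms(1)] hc] .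
  also have "\<dots> = mob (sl2_mult h g) (c u)" using mob_inv_left assms by metis
  also have "\<dots> = mob h (mob g (c u))" using mob_mult assms by metis
  finally show ?thesis using assms(3) by simp
qed

lemma finish:
  assumes csg: "closed_surface_group G" and kG: "k \<in> G" and z0: "Im z0 > 0"
    and dN: "det1 N" and hqv: "hq (mob N z0) (mob N (mob k z0)) = 1 + 8*u*(1+u)"
    and u: "0 < u" "u < (sinh (2*\<epsilon>))^2" and ep: "\<epsilon> > 0" and sys: "8 * \<epsilon> < systole G"
  shows False
proof -
  have dk: "det1 k" using csg_det1 csg kG by blast
  define z1 where "z1 = mob k z0"
  have z1: "Im z1 > 0" unfolding z1_def using mob_hplane[OF dk z0] .
  have hd: "hdist z0 z1 = hdist (mob N z0) (mob N z1)" using hdist_mob[OF dN z0 z1] by simp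
  have Nz0: "Im (mob N z0) > 0" and Nz1: "Im (mob N z1) > 0" using mob_hplane[OF dN] z0 z1 by auto
  define S where "S = (sinh (2*\<epsilon>))^2"
  have S0: "S \<ge> 0" unfolding S_def by simp
  have uS: "u < S" using u(2) S_def by simp
  have "u*(1+u) < S*(1+S)" using uS u(1) by (intro mult_strict_mono) auto
  then have "8*u*(1+u) < 8*S*(1+S)" by simp
  moreover have "cosh (8 * \<epsilon>) = 1 + 8*S*(1+S)" using cosh_4[of "2*\<epsilon>"] unfolding S_def by simp
  ultimately have "hq (mob N z0) (mob N z1) < cosh (8 * \<epsilon>)" using hqv z1_def by simp
  then have lt: "hdist z0 z1 < 8 * \<epsilon>" using hd hdist_less_iff[OF Nz0 Nz1] ep by simp
  have "z1 \<noteq> z0"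
  proof
    assume "z1 = z0"
    then have "hq (mob N z0) (mob N z1) = 1" unfolding hq_def by simp
    then show False using hqv u z1_def by (simp add: add_pos_pos)
  qed
  then have "nontrivial_elt k" unfolding nontrivial_elt_def hplane_def using z0 z1_def by auto
  then have "systole G \<le> hdist z0 z1" unfolding z1_def using systole_le[OF csg kG _ z0] by simp
  then show False using lt sys by simp
qed

lemma main_half:
  fixes G :: "sl2 set" and g h1 h2 :: sl2 and c :: "real \<Rightarrow> complex"
    and l \<epsilon> :: real and p :: complex and \<alpha> \<beta> :: "complex set"
  assumes csg: "closed_surface_group G"
    and gG: "g \<in> G" and h1G: "h1 \<in> G" and h2G: "h2 \<in> G"
    and ug: "unit_geodesic c" and lpos: "l > 0" and gtr: "\<forall>t. mob g (c t) = c (t + l)"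
    and al: "\<alpha> = mob h1 ` range c" and be: "\<beta> = mob h2 ` range c"
    and ne: "\<alpha> \<noteq> \<beta>" and pa: "p \<in> \<alpha>" and pb: "p \<in> \<beta>"
    and ep: "\<epsilon> > 0" and sys: "8 * \<epsilon> < systole G"
  shows "seg_length (trap \<alpha> \<beta> \<epsilon>) < l + 4 * \<epsilon>"
proof -
  have dg: "det1 g" using csg_det1 csg gG by blast
  have dh1: "det1 h1" using csg_det1 csg h1G by blast
  have dh2: "det1 h2" using csg_det1 csg h2G by blast
  have cIm: "Im (c s) > 0" for s using ug unfolding unit_geodesic_def hplane_def by auto
  obtain M where dM: "det1 M" and cM0: "\<forall>s. c s = mob M (\<i> * of_real (exp s))"
    using geodesic_class[OF ug] by blast
  have cM: "\<forall>s. c s = mob M (gp s)" using cM0 unfolding gp_def by simp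
  obtain s1 where s1: "p = mob h1 (c s1)" using pa al by blast
  obtain s2 where s2: "p = mob h2 (c s2)" using pb be by blast
  obtain A where dA: "det1 A" and Ac: "\<forall>t. mob A (gp t) = mob h1 (c (t + s1))"
    using reparam[OF dh1 dM cM] by blast
  obtain B where dB: "det1 B" and Bc: "\<forall>t. mob B (gp t) = mob h2 (c (t + s2))"
    using reparam[OF dh2 dM cM] by blast
  have alA: "\<alpha> = range (\<lambda>t. mob A (gp t))"
  proof
    show "\<alpha> \<subseteq> range (\<lambda>t. mob A (gp t))"
    proof
      fix x assume "x \<in> \<alpha>"
      then obtain u where "x = mob h1 (c u)" using al by blast
      then have "x = mob A (gp (u - s1))" using Ac by simp
      then show "x \<in> range (\<lambda>t. mob A (gp t))" by blast
    qed
    show "range (\<lambda>t. mob A (gp t)) \<subseteq> \<alpha>" using Ac al by auto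
  qed
  have beB: "\<beta> = range (\<lambda>t. mob B (gp t))"
  proof
    show "\<beta> \<subseteq> range (\<lambda>t. mob B (gp t))"
    proof
      fix x assume "x \<in> \<beta>"
      then obtain u where "x = mob h2 (c u)" using be by blast
      then have "x = mob B (gp (u - s2))" using Bc by simp
      then show "x \<in> range (\<lambda>t. mob B (gp t))" by blast
    qed
    show "range (\<lambda>t. mob B (gp t)) \<subseteq> \<beta>" using Bc be by auto
  qed
  have pA: "p = mob A \<i>" using Ac s1 gp_0[symmetric] by (metis add_0)
  have pB: "p = mob B \<i>" using Bc s2 gp_0[symmetric] by (metis add_0)
  define N where "N = sl2_inv B"
  have dN: "det1 N" unfolding N_def using det1_inv dB by blast
  have NB: "mob N (mob B z) = z" if "Im z > 0" for z unfolding N_def using mob_inv_left[OF dB that] .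
  have BN: "mob B (mob N z) = z" if "Im z > 0" for z unfolding N_def using mob_inv_right[OF dB that] .
  define A' where "A' = sl2_mult N A"
  have dA': "det1 A'" unfolding A'_def using det1_mult dN dA by blast
  have "mob A' \<i> = \<i>" unfolding A'_def using mob_mult[OF dN dA, of \<i>] pA pB NB[of \<i>] by simp
  then obtain a b where ab: "a^2 + b^2 = 1" and A'r: "A' = rot a b" using stab_i[OF dA'] by blast
  define R where "R = rot a b"
  have dR: "det1 R" unfolding R_def using det1_rot[OF ab] .
  have NA: "mob N (mob A z) = mob R z" if "Im z > 0" for z
    using mob_mult[OF dN dA that] A'r unfolding A'_def R_def by simp
  have alpha_pt: "mob A (gp t) = mob B (mob R (gp t))" for t
    using NA[OF gp_Im, of t] BN[of "mob A (gp t)"] mob_hplane[OF dA gp_Im] by metis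
  have beta_pt: "mob B (gp s) \<in> \<beta>" for s using beB by blast
  have alpha_in: "mob A (gp t) \<in> \<alpha>" for t using alA by blast
  have a0: "a \<noteq> 0"
  proof
    assume a: "a = 0"
    then have b2: "b^2 = 1" using ab by simp
    then have bnz: "b \<noteq> 0" by auto
    have Rgp: "mob R (gp t) = gp (-t)" for t
    proof -
      have "mob R (gp t) = of_real b / (- of_real b * gp t)" unfolding R_def rot_def mob_def a by simp
      also have "\<dots> = - 1 / gp t" using bnz by (simp add: field_simps)
      also have "\<dots> = gp (-t)" unfolding gp_def by (simp add: exp_minus field_simps)
      finally show ?thesis .
    qed
    have "\<alpha> = \<beta>"
    proof
      show "\<alpha> \<subseteq> \<beta>" using alA alpha_pt Rgp beta_pt by auto
      show "\<beta> \<subseteq> \<alpha>"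
      proof
        fix x assume "x \<in> \<beta>"
        then obtain s where "x = mob B (gp s)" using beB by blast
        then have "x = mob A (gp (-s))" using alpha_pt Rgp by simp
        then show "x \<in> \<alpha>" using alpha_in by simp
      qed
    qed
    then show False using ne by simp
  qed
  have b0: "b \<noteq> 0"
  proof
    assume b: "b = 0"
    then have "a^2 = 1" using ab by simp
    then have anz: "a \<noteq> 0" by auto
    have Rgp: "mob R (gp t) = gp t" for t
      unfolding R_def rot_def mob_def b using anz by (simp add: field_simps)
    have "\<alpha> = \<beta>" unfolding alA beB using alpha_pt Rgp by simp
    then show False using ne by simp
  qed
  define Ta where "Ta = sl2_mult (sl2_mult h1 g) (sl2_inv h1)"
  define Tb where "Tb = sl2_mult (sl2_mult h2 g) (sl2_inv h2)"
  have TaG: "Ta \<in> G" unfolding Ta_def using csg h1G gG csg_mult csg_inv by metis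
  have TbG: "Tb \<in> G" unfolding Tb_def using csg h2G gG csg_mult csg_inv by metis
  have dTa: "det1 Ta" using csg_det1 csg TaG by blast
  have dTb: "det1 Tb" using csg_det1 csg TbG by blast
  have cI: "\<forall>t. Im (c t) > 0" using cIm by blast
  have Ta_act: "mob Ta (mob A (gp t)) = mob A (gp (t + l))" for t
    using Ac conj_tr[OF dh1 dg gtr cI, of "t + s1"] unfolding Ta_def by (simp add: algebra_simps)
  have Tb_act: "mob Tb (mob B (gp t)) = mob B (gp (t + l))" for t
    using Bc conj_tr[OF dh2 dg gtr cI, of "t + s2"] unfolding Tb_def by (simp add: algebra_simps)
  define NTB where "NTB = sl2_mult (sl2_mult N Tb) B"
  have dNTB: "det1 NTB" unfolding NTB_def using det1_mult dN dTb dB by blast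
  have NTB_act: "mob NTB z = mob N (mob Tb (mob B z))" if "Im z > 0" for z
    unfolding NTB_def using mob_mult[OF det1_mult[OF dN dTb] dB that] mob_mult[OF dN dTb] mob_hplane[OF dB that] by simp
  have "\<forall>s. mob NTB (\<i> * of_real (exp s)) = \<i> * of_real (exp (s + l))"
  proof
    fix s
    have "mob NTB (gp s) = gp (s + l)" using NTB_act[OF gp_Im] Tb_act NB[OF gp_Im] by simp
    then show "mob NTB (\<i> * of_real (exp s)) = \<i> * of_real (exp (s + l))" unfolding gp_def .
  qed
  then have NTBz: "mob NTB z = of_real (exp l) * z" for z using fix_axis[OF dNTB] by blast
  have NTb: "mob N (mob Tb w) = of_real (exp l) * mob N w" if "Im w > 0" for w
  proof -
    have Nw: "Im (mob N w) > 0" using mob_hplane[OF dN that] .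
    have "mob N (mob Tb w) = mob N (mob Tb (mob B (mob N w)))" using BN[OF that] by simp
    also have "\<dots> = mob NTB (mob N w)" using NTB_act[OF Nw] by simp
    finally show ?thesis using NTBz by simp
  qed
  define E where "E = exp (l/2)"
  have Ep: "E > 0" using E_def by simp
  have shp: "sinh (l/2) > 0" using lpos by simp
  have trap_pt: "4*a^2*b^2*(sinh t)^2 < (sinh (2*\<epsilon>))^2"
    if tin: "mob A (gp t) \<in> trap \<alpha> \<beta> \<epsilon>" for t
  proof -
    obtain y where yb: "y \<in> \<beta>" and hxy: "hdist (mob A (gp t)) y < 2 * \<epsilon>" using tin unfolding trap_def by blast
    obtain s where ys: "y = mob B (gp s)" using yb beB by blast
    have Rp: "Im (mob R (gp t)) > 0" using mob_hplane[OF dR gp_Im] .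
    have "hdist (mob A (gp t)) y = hdist (mob R (gp t)) (gp s)"
      unfolding ys alpha_pt using hdist_mob[OF dB Rp gp_Im] by simp
    then have "hq (mob R (gp t)) (gp s) < cosh (2 * \<epsilon>)" using hxy hdist_less_iff[OF Rp gp_Im] ep by simp
    then show ?thesis
      using trap_cond[OF ab, of "exp s" t "2*\<epsilon>"] unfolding R_def gp_def by simp
  qed
  define z0 where "z0 = mob A (gp (-(l/2)))"
  have z0I: "Im z0 > 0" unfolding z0_def using mob_hplane[OF dA gp_Im] .
  have Taz0: "mob Ta z0 = mob A (gp (l/2))" unfolding z0_def using Ta_act[of "-(l/2)"] by simp
  have TaI: "Im (mob Ta z0) > 0" using mob_hplane[OF dTa z0I] .
  have Nz0: "mob N z0 = mob (rot a b) (\<i> * of_real (inverse E))"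
  proof -
    have g: "gp (-(l/2)) = \<i> * of_real (inverse E)" unfolding gp_def E_def by (simp add: exp_minus)
    show ?thesis unfolding z0_def using NA[OF gp_Im, of "-(l/2)"] unfolding R_def g by simp
  qed
  have NTaz0: "mob N (mob Ta z0) = mob (rot a b) (\<i> * of_real E)"
  proof -
    have g: "gp (l/2) = \<i> * of_real E" unfolding gp_def E_def by simp
    show ?thesis unfolding Taz0 using NA[OF gp_Im, of "l/2"] unfolding R_def g by simp
  qed
  have el: "exp l = E^2" unfolding E_def by (simp flip: exp_of_nat_mult)
  have small: "\<bar>t\<bar> < l/2" if "mob A (gp t) \<in> trap \<alpha> \<beta> \<epsilon>" for t
  proof (rule ccontr)
    assume "\<not> \<bar>t\<bar> < l/2"
    then have tl: "\<bar>t\<bar> \<ge> l/2" by simp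
    have tr: "4*a^2*b^2*(sinh t)^2 < (sinh (2*\<epsilon>))^2" using trap_pt[OF that] .
    have "sinh (l/2) \<le> sinh \<bar>t\<bar>" using tl by (simp only: sinh_real_le_iff)
    then have "(sinh (l/2))^2 \<le> (sinh t)^2" using shp
      by (metis power2_abs power_mono sinh_real_abs less_imp_le)
    then have "4*a^2*b^2*(sinh (l/2))^2 \<le> 4*a^2*b^2*(sinh t)^2" by (simp add: mult_left_mono)
    then have V: "4*a^2*b^2*(sinh (l/2))^2 < (sinh (2*\<epsilon>))^2" using tr by linarith
    have sh2p: "(sinh (l/2))^2 > 0" using shp by simp
    show False
    proof (cases "b^2 \<le> a^2")
      case True
      define k where "k = sl2_mult (sl2_inv Tb) Ta"
      have kG: "k \<in> G" unfolding k_def using csg TbG TaG csg_mult csg_inv by metis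
      define w where "w = mob k z0"
      have w: "w = mob (sl2_inv Tb) (mob Ta z0)" unfolding w_def k_def using mob_mult[OF det1_inv[OF dTb] dTa z0I] .
      have wI: "Im w > 0" unfolding w using mob_hplane[OF det1_inv[OF dTb] TaI] .
      have "mob Tb w = mob Ta z0" unfolding w using mob_inv_right[OF dTb TaI] .
      then have "mob N (mob Ta z0) = of_real (E^2) * mob N w" using NTb[OF wI] el by simp
      then have Nw: "mob N w = of_real (inverse (E^2)) * mob (rot a b) (\<i> * of_real E)"
        using NTaz0 Ep by (simp add: field_simps)
      define u where "u = b^2 * (sinh (l/2))^2"
      have hqv: "hq (mob N z0) (mob N (mob k z0)) = 1 + 8*u*(1+u)"
        unfolding w_def[symmetric] Nz0 Nw disp_case1[OF ab Ep] u_def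
        using disp_sinh[OF E_def, of b] by simp
      have up: "u > 0" unfolding u_def using b0 sh2p by simp
      have "2*a^2 \<ge> 1" using True ab by simp
      then have "u \<le> 2*a^2*b^2*(sinh (l/2))^2" unfolding u_def
        using mult_right_mono[of 1 "2*a^2" "b^2 * (sinh (l/2))^2"] by (simp add: algebra_simps)
      then have "u < (sinh (2*\<epsilon>))^2" using V up by linarith
      then show False using finish[OF csg kG z0I dN hqv up _ ep sys] by simp
    next
      case False
      define k where "k = sl2_mult Tb Ta"
      have kG: "k \<in> G" unfolding k_def using csg TbG TaG csg_mult by metis
      have w: "mob k z0 = mob Tb (mob Ta z0)" unfolding k_def using mob_mult[OF dTb dTa z0I] .
      have Nw: "mob N (mob k z0) = of_real (E^2) * mob (rot a b) (\<i> * of_real E)"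
        unfolding w using NTb[OF TaI] NTaz0 el by simp
      define u where "u = a^2 * (sinh (l/2))^2"
      have hqv: "hq (mob N z0) (mob N (mob k z0)) = 1 + 8*u*(1+u)"
        unfolding Nz0 Nw disp_case2[OF ab Ep] u_def
        using disp_sinh[OF E_def, of a] by simp
      have up: "u > 0" unfolding u_def using a0 sh2p by simp
      have "2*b^2 \<ge> 1" using False ab by simp
      then have "u \<le> 2*a^2*b^2*(sinh (l/2))^2" unfolding u_def
        using mult_right_mono[of 1 "2*b^2" "a^2 * (sinh (l/2))^2"] by (simp add: algebra_simps)
      then have "u < (sinh (2*\<epsilon>))^2" using V up by linarith
      then show False using finish[OF csg kG z0I dN hqv up _ ep sys] by simp
    qed
  qed
  have pT: "p \<in> trap \<alpha> \<beta> \<epsilon>" unfolding trap_def using pa pb ep hdist_self[of p] by (auto intro!: bexI[of _ p])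
  have dist_alpha: "hdist (mob A (gp t)) (mob A (gp t')) = \<bar>t - t'\<bar>" for t t'
    using Ac hdist_mob[OF dh1 cIm cIm, of "t + s1" "t' + s1"] ug unfolding unit_geodesic_def by simp
  have "seg_length (trap \<alpha> \<beta> \<epsilon>) \<le> l"
    unfolding seg_length_def
  proof (rule cSup_least)
    show "{hdist x y |x y. x \<in> trap \<alpha> \<beta> \<epsilon> \<and> y \<in> trap \<alpha> \<beta> \<epsilon>} \<noteq> {}" using pT by blast
    fix d assume "d \<in> {hdist x y |x y. x \<in> trap \<alpha> \<beta> \<epsilon> \<and> y \<in> trap \<alpha> \<beta> \<epsilon>}"
    then obtain x y where d: "d = hdist x y" "x \<in> trap \<alpha> \<beta> \<epsilon>" "y \<in> trap \<alpha> \<beta> \<epsilon>" by blast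
    obtain t where t: "x = mob A (gp t)" using d(2) alA unfolding trap_def by blast
    obtain t' where t': "y = mob A (gp t')" using d(3) alA unfolding trap_def by blast
    have "\<bar>t\<bar> < l/2" "\<bar>t'\<bar> < l/2" using small d(2,3) t t' by auto
    then show "d \<le> l" using d(1) t t' dist_alpha by simp
  qed
  then show ?thesis using ep by simp
qed

theorem lemma3p1:
  fixes G :: "sl2 set" and g h1 h2 :: sl2 and c :: "real \<Rightarrow> complex"
    and l \<epsilon> :: real and p :: complex and \<alpha> \<beta> :: "complex set"
  assumes "closed_surface_group G"
    and "g \<in> G" and "h1 \<in> G" and "h2 \<in> G"
    and "unit_geodesic c" and "l > 0" and "\<forall>t. mob g (c t) = c (t + l)"
    and "\<alpha> = mob h1 ` range c" and "\<beta> = mob h2 ` range c"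
    and "\<alpha> \<noteq> \<beta>" and "p \<in> \<alpha>" and "p \<in> \<beta>"
    and "\<epsilon> > 0" and "8 * \<epsilon> < systole G"
  shows "seg_length (trap \<alpha> \<beta> \<epsilon>) < l + 4 * \<epsilon> \<and>
         seg_length (trap \<beta> \<alpha> \<epsilon>) < l + 4 * \<epsilon>"
proof
  show "seg_length (trap \<alpha> \<beta> \<epsilon>) < l + 4 * \<epsilon>"
    by (rule main_half[OF assms])
  have "\<beta> \<noteq> \<alpha>" using assms(10) by simp
  then show "seg_length (trap \<beta> \<alpha> \<epsilon>) < l + 4 * \<epsilon>"
    by (rule main_half[OF assms(1,2,4,3,5,6,7,9,8) _ assms(12,11,13,14)])
qed

end
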